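(* Let $A(0)=1$ and $A(n)=nA(n-1)+1$ for $n\ge1$. Then: (i) The map $n\mapsto A(n)$ on $\{0,1,2,\dots\}$ extends uniquely to a continuous function $\tilde A:\mathbb{Z}_2\to\mathbb{Z}_2$. (ii) For each $k\ge1$ there is a unique $c_k\in[0,2^k)\cap\mathbb{Z}$ with $A(c_k)\equiv 0\pmod{2^k}$. (iii) The limit $c=\lim_{k\to\infty}c_k$ exists in $\mathbb{Z}_2$ and is the unique zero of $\tilde A$; its $2$-adic expansion begins $11001110010100010100110001\ldots$ (digits listed from the $2^0$ place upward). (iv) For every $n\in\mathbb{Z}_2$, $|\tilde A(n)|_2=|n-c|_2$.
   Context: $\mathbb{Z}_2$ denotes the $2$-adic integers and $|\cdot|_2$ the $2$-adic absolute value, normalized so that $|x|_2=2^{-v}$ where $2^v$ exactly divides $x$. *)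

theory Defs
  imports Complex_Main
begin

fun A :: "nat \<Rightarrow> nat" where
  "A 0 = 1"
| "A (Suc n) = Suc n * A n + 1"

text \<open>2-adic integers, represented by their digit sequences (digit i is the
  coefficient of 2^i). Every digit sequence is a 2-adic integer and vice versa.\<close>
type_synonym z2 = "nat \<Rightarrow> bool"

definition z2_trunc :: "z2 \<Rightarrow> nat \<Rightarrow> int" where
  "z2_trunc x k = (\<Sum>i<k. if x i then 2 ^ i else 0)"

text \<open>Embedding of the integers (two's complement digits for negatives).\<close>
definition z2_of_int :: "int \<Rightarrow> z2" where
  "z2_of_int a = (\<lambda>i. odd (a div 2 ^ i))"

definition z2_of_nat :: "nat \<Rightarrow> z2" where
  "z2_of_nat n = z2_of_int (int n)"

definition z2_zero :: z2 where
  "z2_zero = (\<lambda>i. False)"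

text \<open>Subtraction in Z_2: digit i of x - y is determined by x - y mod 2^(i+1).\<close>
definition z2_diff :: "z2 \<Rightarrow> z2 \<Rightarrow> z2" where
  "z2_diff x y = (\<lambda>i. odd (((z2_trunc x (Suc i) - z2_trunc y (Suc i)) mod 2 ^ Suc i) div 2 ^ i))"

definition z2_abs :: "z2 \<Rightarrow> real" where
  "z2_abs x = (if \<forall>i. \<not> x i then 0 else (1/2) ^ (LEAST i. x i))"

definition z2_continuous :: "(z2 \<Rightarrow> z2) \<Rightarrow> bool" where
  "z2_continuous f \<longleftrightarrow> (\<forall>x. \<forall>e>0. \<exists>d>0. \<forall>y.
      z2_abs (z2_diff y x) < d \<longrightarrow> z2_abs (z2_diff (f y) (f x)) < e)"

definition z2_tendsto :: "(nat \<Rightarrow> z2) \<Rightarrow> z2 \<Rightarrow> bool" where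
  "z2_tendsto X L \<longleftrightarrow> (\<forall>e>0. \<exists>N. \<forall>k\<ge>N. z2_abs (z2_diff (X k) L) < e)"

text \<open>The continuous extension of A to Z_2 (well-defined by part (i)).\<close>
definition Atil :: "z2 \<Rightarrow> z2" where
  "Atil = (THE F. z2_continuous F \<and> (\<forall>n. F (z2_of_nat n) = z2_of_nat (A n)))"

text \<open>c_k: the unique c in [0, 2^k) with A(c) = 0 mod 2^k (well-defined by part (ii)).\<close>
definition ck :: "nat \<Rightarrow> nat" where
  "ck k = (THE c. c < 2 ^ k \<and> 2 ^ k dvd A c)"

definition c_digits :: "nat list" where
  "c_digits = [1,1,0,0,1,1,1,0,0,1,0,1,0,0,0,1,0,1,0,0,1,1,0,0,0,1]"

end

theory Submission
  imports Defs
begin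


lemma A_parity: "even (A n) \<longleftrightarrow> odd n"
  by (induction n) auto

lemma A_period: "int h dvd int (A (n + h)) - int (A n)"
proof (induction n)
  case 0
  show ?case
  proof (cases h)
    case 0 then show ?thesis by simp
  next
    case (Suc h')
    then have "int (A (0 + h)) - int (A 0) = int h * int (A h')" by (simp add: algebra_simps)
    then show ?thesis by simp
  qed
next
  case (Suc n)
  have "int (A (Suc n + h)) - int (A (Suc n)) = int (Suc n) * (int (A (n + h)) - int (A n)) + int h * int (A (n+h))"
    by (simp add: algebra_simps)
  then show ?case using Suc by simp
qed

lemma A_period_mult: "A (r + h * q) mod h = A r mod h"
proof (induction q)
  case 0 then show ?case by simp
next
  case (Suc q)
  have "int h dvd int (A (r + h*q + h)) - int (A (r + h*q))" by (rule A_period)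
  then have "A (r + h*q + h) mod h = A (r + h*q) mod h"
    by (metis mod_eq_dvd_iff of_nat_eq_iff zmod_int)
  then show ?case using Suc by (simp add: ac_simps)
qed

lemma A_mod: "A n mod h = A (n mod h) mod h"
  using A_period_mult[of "n mod h" h "n div h"] by simp

lemma A_step:
  assumes "even h" "h > 0"
  shows "(odd n \<longrightarrow> int (2*h) dvd int (A (n + h)) - int (A n) - int h)
       \<and> (even n \<longrightarrow> int (2*h) dvd int (A (n + h)) - int (A n))"
proof (induction n)
  case 0
  obtain h' where h': "h = Suc h'" using assms by (cases h) auto
  have "odd h'" using assms h' by simp
  then have "even (A h')" using A_parity by simp
  then obtain t where t: "A h' = 2 * t" by blast
  have "int (A (0 + h)) - int (A 0) = int h * int (A h')" using h' by (simp add: algebra_simps)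
  also have "\<dots> = int (2*h) * int t" using t by simp
  finally show ?case by simp
next
  case (Suc n)
  have eq: "int (A (Suc n + h)) - int (A (Suc n)) = int (Suc n) * (int (A (n + h)) - int (A n)) + int h * int (A (n+h))"
    by (simp add: algebra_simps)
  show ?case
  proof (cases "even n")
    case True
    then have d: "int (2*h) dvd int (A (n + h)) - int (A n)" using Suc by simp
    have "odd (A (n+h))" using True assms A_parity by simp
    then obtain t where t: "A (n+h) = 2*t + 1" by (metis oddE)
    have "int (A (Suc n + h)) - int (A (Suc n)) - int h = int (Suc n) * (int (A (n + h)) - int (A n)) + int (2*h) * int t"
      using eq t by (simp add: algebra_simps)
    then have "int (2*h) dvd int (A (Suc n + h)) - int (A (Suc n)) - int h"
      using d by (metis dvd_add dvd_mult dvd_triv_left)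
    then show ?thesis using True by simp
  next
    case False
    then have d: "int (2*h) dvd int (A (n + h)) - int (A n) - int h" using Suc by simp
    then obtain s where s: "int (A (n + h)) - int (A n) = int h + int (2*h) * s" by (metis dvd_def diff_eq_eq add.commute)
    have "even (A (n+h))" using False assms A_parity by simp
    then obtain t where t: "A (n+h) = 2*t" by blast
    obtain u where u: "Suc n = 2*u" using False by (metis evenE even_Suc)
    have "int (A (Suc n + h)) - int (A (Suc n)) = int (2*h) * (int u + 2 * int u * s + int t)"
    proof -
      have iu: "int (Suc n) = 2 * int u" using u by simp
      have it: "int (A (n+h)) = 2 * int t" using t by simp
      show ?thesis by (simp only: eq, simp only: s iu, simp only: it, simp add: algebra_simps)
    qed
    then show ?thesis using False by simp
  qed
qed



lemma dvd_int_nat: "(int a dvd int b) = (a dvd b)" by simp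

lemma A_lift:
  assumes "even h" "h > 0" "odd r" "h dvd A r"
  shows "2*h dvd A (r+h) \<longleftrightarrow> \<not> 2*h dvd A r"
proof -
  have "int (2*h) dvd int (A (r + h)) - int (A r) - int h" using A_step[OF assms(1,2)] assms(3) by blast
  then obtain s where s: "int (A (r + h)) - int (A r) - int h = int (2*h) * s" by (metis dvd_def)
  obtain a where a: "A r = h * a" using assms(4) by blast
  have e1: "int (A (r + h)) = int h * (int a + 1 + 2 * s)" using s a by (simp add: algebra_simps)
  have e2: "int (A r) = int h * int a" using a by simp
  have hp: "int h \<noteq> 0" using assms(2) by simp
  have "2*h dvd A (r+h) \<longleftrightarrow> int h * 2 dvd int h * (int a + 1 + 2 * s)"
    by (metis e1 dvd_int_nat mult.commute of_nat_mult of_nat_numeral)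
  also have "\<dots> \<longleftrightarrow> 2 dvd (int a + 1 + 2 * s)" using hp by simp
  also have "\<dots> \<longleftrightarrow> odd a" by presburger
  also have "\<dots> \<longleftrightarrow> \<not> (int h * 2 dvd int h * int a)" using hp by simp
  also have "\<dots> \<longleftrightarrow> \<not> 2*h dvd A r"
    by (metis e2 dvd_int_nat mult.commute of_nat_mult of_nat_numeral)
  finally show ?thesis .
qed

lemma A_char: "k \<ge> 1 \<Longrightarrow> \<exists>r<2^k. \<forall>n. 2^k dvd A n \<longleftrightarrow> n mod 2^k = r"
proof (induction k)
  case 0 then show ?case by simp
next
  case (Suc k)
  show ?case
  proof (cases "k = 0")
    case True
    have "\<forall>n. 2 dvd A n \<longleftrightarrow> n mod 2 = 1" using A_parity by (simp add: odd_iff_mod_2_eq_one)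
    then show ?thesis using True by (intro exI[of _ 1]) auto
  next
    case False
    then obtain r where r: "r < 2^k" and rc: "\<forall>n. 2^k dvd A n \<longleftrightarrow> n mod 2^k = r" using Suc by auto
    define h :: nat where "h = 2^k"
    have he: "even h" "h > 0" using False h_def by auto
    have hr: "h dvd A r" using rc r h_def by simp
    have "even (A r)" using hr he(1) by (metis dvd_trans)
    then have ro: "odd r" using A_parity by simp
    define r' where "r' = (if 2*h dvd A r then r else r+h)"
    have lift: "2*h dvd A (r+h) \<longleftrightarrow> \<not> 2*h dvd A r" using A_lift[OF he ro hr] .
    have r'lt: "r' < 2*h" using r h_def r'_def by auto
    have main: "2*h dvd A n \<longleftrightarrow> n mod (2*h) = r'" for n
    proof -
      define m where "m = n mod (2*h)"
      have mlt: "m < 2*h" using he m_def by simp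
      have "A n mod (2*h) = A m mod (2*h)" using A_mod m_def by simp
      then have eqd: "2*h dvd A n \<longleftrightarrow> 2*h dvd A m" by (simp add: dvd_eq_mod_eq_0)
      have mm: "m mod h = n mod h" using m_def by (simp add: mod_mod_cancel)
      show ?thesis
      proof
        assume d: "2*h dvd A n"
        then have "h dvd A n" by (metis dvd_mult_right)
        then have "n mod h = r" using rc h_def by simp
        then have "m mod h = r" using mm by simp
        moreover have "m div h < 2" using mlt by (simp add: div_less_iff_less_mult mult.commute)
        ultimately have "m = r \<or> m = r + h"
        proof -
          have "m = (m div h) * h + m mod h" by simp
          moreover have "m div h = 0 \<or> m div h = 1" using \<open>m div h < 2\<close> by linarith
          ultimately show ?thesis using \<open>m mod h = r\<close> by auto
        qed
        then show "n mod (2*h) = r'"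
          using d eqd lift r'_def m_def by auto
      next
        assume "n mod (2*h) = r'"
        then have "m = r'" using m_def by simp
        then show "2*h dvd A n" using eqd lift r'_def by auto
      qed
    qed
    show ?thesis using main r'lt h_def by (intro exI[of _ r']) auto
  qed
qed

lemma z2_of_int_bit: "z2_of_int a i = bit a i"
  by (simp add: z2_of_int_def bit_iff_odd)

lemma z2_of_nat_bit: "z2_of_nat n i = bit n i"
  by (simp add: z2_of_nat_def z2_of_int_bit bit_of_nat_iff_bit)

lemma trunc_Suc: "z2_trunc x (Suc k) = z2_trunc x k + (if x k then 2^k else 0)"
  by (simp add: z2_trunc_def)

lemma trunc_bounds: "0 \<le> z2_trunc x k \<and> z2_trunc x k < 2^k"
  by (induction k) (auto simp: trunc_Suc z2_trunc_def)

lemma trunc_take_bit: "(\<forall>i<k. x i = bit a i) \<Longrightarrow> z2_trunc x k = take_bit k (a::int)"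
  by (induction k) (auto simp: trunc_Suc take_bit_Suc_from_most z2_trunc_def)

lemma trunc_bit: "i < k \<Longrightarrow> bit (z2_trunc x k) i = x i"
proof (induction k)
  case 0 then show ?case by simp
next
  case (Suc k)
  define t where "t = z2_trunc x k"
  have tb: "0 \<le> t" "t < 2^k" using trunc_bounds t_def by auto
  have tk: "take_bit k t = t" using tb by (simp add: take_bit_int_eq_self)
  have ndiv: "t div 2^k = 0" using tb by simp
  show ?case
  proof (cases "i < k")
    case True
    have "take_bit k (t + (if x k then 2^k else 0)) = take_bit k t"
      by (simp add: take_bit_eq_mod)
    then have "bit (t + (if x k then 2^k else 0)) i = bit t i"
      using True by (metis bit_take_bit_iff)
    then show ?thesis using Suc True by (simp add: trunc_Suc t_def)
  next
    case False
    then have ik: "i = k" using Suc by simp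
    have "(t + (if x k then 2^k else 0)) div 2^k = (if x k then 1 else 0)"
      using ndiv by auto
    then show ?thesis using ik by (simp add: trunc_Suc t_def[symmetric] bit_iff_odd)
  qed
qed

lemma trunc_eq_iff: "z2_trunc x k = z2_trunc y k \<longleftrightarrow> (\<forall>i<k. x i = y i)"
proof
  assume "z2_trunc x k = z2_trunc y k"
  then show "\<forall>i<k. x i = y i" using trunc_bit by metis
next
  assume "\<forall>i<k. x i = y i"
  then show "z2_trunc x k = z2_trunc y k" unfolding z2_trunc_def by (intro sum.cong) auto
qed

lemma trunc_mono: "j \<le> k \<Longrightarrow> z2_trunc x j = take_bit j (z2_trunc x k)"
  by (rule trunc_take_bit) (simp add: trunc_bit)

lemma diff_bit: "i < k \<Longrightarrow> z2_diff x y i = bit (z2_trunc x k - z2_trunc y k) i"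
proof -
  assume ik: "i < k"
  have "z2_diff x y i = bit (take_bit (Suc i) (z2_trunc x (Suc i) - z2_trunc y (Suc i))) i"
    by (simp add: z2_diff_def bit_iff_odd take_bit_eq_mod)
  also have "\<dots> = bit (take_bit (Suc i) (z2_trunc x k - z2_trunc y k)) i"
    using ik by (simp add: trunc_mono[of "Suc i" k] take_bit_diff)
  also have "\<dots> = bit (z2_trunc x k - z2_trunc y k) i" by (simp add: bit_take_bit_iff)
  finally show ?thesis .
qed

lemma take_bit_zero_int: "take_bit k (d::int) = 0 \<longleftrightarrow> (\<forall>i<k. \<not> bit d i)"
  by (auto simp: bit_eq_iff bit_take_bit_iff)

lemma take_bit_zero_nat: "take_bit k (d::nat) = 0 \<longleftrightarrow> (\<forall>i<k. \<not> bit d i)"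
  by (auto simp: bit_eq_iff bit_take_bit_iff)

lemma diff_zero_iff: "(\<forall>i<k. \<not> z2_diff x y i) \<longleftrightarrow> (\<forall>i<k. x i = y i)"
proof -
  define a where "a = z2_trunc x k"
  define b where "b = z2_trunc y k"
  have ab: "a mod 2^k = a" "b mod 2^k = b" using trunc_bounds a_def b_def by auto
  have "(\<forall>i<k. \<not> z2_diff x y i) \<longleftrightarrow> (\<forall>i<k. \<not> bit (a - b) i)"
    using diff_bit a_def b_def by auto
  also have "\<dots> \<longleftrightarrow> take_bit k (a - b) = 0" by (simp add: take_bit_zero_int)
  also have "\<dots> \<longleftrightarrow> a mod 2^k = b mod 2^k" by (simp add: take_bit_eq_mod mod_eq_dvd_iff dvd_eq_mod_eq_0)
  also have "\<dots> \<longleftrightarrow> a = b" using ab by simp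
  also have "\<dots> \<longleftrightarrow> (\<forall>i<k. x i = y i)" using trunc_eq_iff a_def b_def by simp
  finally show ?thesis .
qed

lemma half_pow_le: "(1/2::real)^m \<le> (1/2)^k \<longleftrightarrow> k \<le> m"
  by (rule power_decreasing_iff) auto

lemma half_pow_lt: "(1/2::real)^m < (1/2)^k \<longleftrightarrow> k < m"
  by (rule power_strict_decreasing_iff) auto

lemma abs_le_iff: "z2_abs z \<le> (1/2)^k \<longleftrightarrow> (\<forall>i<k. \<not> z i)"
proof (cases "\<forall>i. \<not> z i")
  case True then show ?thesis by (simp add: z2_abs_def)
next
  case False
  define m where "m = (LEAST i. z i)"
  have zm: "z m" using False m_def by (metis LeastI)
  have lt: "\<forall>i<m. \<not> z i" using m_def not_less_Least by blast
  have "z2_abs z = (1/2)^m" using False m_def by (simp add: z2_abs_def)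
  then have "z2_abs z \<le> (1/2)^k \<longleftrightarrow> k \<le> m" using half_pow_le by simp
  also have "\<dots> \<longleftrightarrow> (\<forall>i<k. \<not> z i)" using zm lt by (meson not_le less_le_trans)
  finally show ?thesis .
qed

lemma abs_lt_imp: "z2_abs z < (1/2)^k \<Longrightarrow> \<forall>i<Suc k. \<not> z i"
proof (cases "\<forall>i. \<not> z i")
  case True then show ?thesis by simp
next
  case False
  assume a: "z2_abs z < (1/2)^k"
  define m where "m = (LEAST i. z i)"
  have zm: "z m" using False m_def by (metis LeastI)
  have lt: "\<forall>i<m. \<not> z i" using m_def not_less_Least by blast
  have "z2_abs z = (1/2)^m" using False m_def by (simp add: z2_abs_def)
  then have "k < m" using a half_pow_lt by simp
  then show ?thesis using lt by auto
qed

lemma small_pow: "e > 0 \<Longrightarrow> \<exists>k. (1/2::real)^k < e"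
  using real_arch_pow_inv[of e "1/2"] by auto

lemma abs_eq:
  assumes "\<forall>k. (\<forall>i<k. \<not> u i) \<longleftrightarrow> (\<forall>i<k. \<not> v i)"
  shows "z2_abs u = z2_abs v"
proof -
  have le: "z2_abs u \<le> (1/2)^k \<longleftrightarrow> z2_abs v \<le> (1/2)^k" for k
    using assms abs_le_iff by simp
  have zu: "(\<forall>i. \<not> u i) \<longleftrightarrow> (\<forall>k. \<forall>i<k. \<not> u i)" using lessI by blast
  have zv: "(\<forall>i. \<not> v i) \<longleftrightarrow> (\<forall>k. \<forall>i<k. \<not> v i)" using lessI by blast
  have z: "(\<forall>i. \<not> u i) \<longleftrightarrow> (\<forall>i. \<not> v i)"
    using assms zu zv by simp
  show ?thesis
  proof (cases "\<forall>i. \<not> u i")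
    case True then show ?thesis using z by (simp add: z2_abs_def)
  next
    case False
    then have F2: "\<not> (\<forall>i. \<not> v i)" using z by simp
    define m where "m = (LEAST i. u i)"
    define m' where "m' = (LEAST i. v i)"
    have au: "z2_abs u = (1/2)^m" using False m_def by (simp add: z2_abs_def)
    have av: "z2_abs v = (1/2)^m'" using F2 m'_def by (simp add: z2_abs_def)
    have "m \<le> m'" using le[of m] au av half_pow_le by simp
    moreover have "m' \<le> m" using le[of m'] au av half_pow_le by simp
    ultimately show ?thesis using au av by simp
  qed
qed

lemma approx_nat: "\<forall>i<m. z2_of_nat (nat (z2_trunc x m)) i = x i"
proof -
  have e: "int (nat (z2_trunc x m)) = z2_trunc x m" using trunc_bounds by simp
  show ?thesis
  proof (intro allI impI)
    fix i assume i: "i < m"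
    have "z2_of_nat (nat (z2_trunc x m)) i = bit (int (nat (z2_trunc x m))) i"
      by (simp only: z2_of_nat_def z2_of_int_bit)
    also have "\<dots> = x i" using e trunc_bit[OF i] by simp
    finally show "z2_of_nat (nat (z2_trunc x m)) i = x i" .
  qed
qed

lemma agree_abs: "(\<forall>i<m. x i = y i) \<Longrightarrow> z2_abs (z2_diff x y) \<le> (1/2)^m"
  using abs_le_iff diff_zero_iff by blast

lemma cont_unique:
  assumes F: "z2_continuous F" and G: "z2_continuous G"
    and eq: "\<forall>n. F (z2_of_nat n) = G (z2_of_nat n)"
  shows "F = G"
proof (intro ext)
  fix x i
  have e: "(1/2::real)^i > 0" by simp
  have cF: "\<And>e. e > 0 \<Longrightarrow> \<exists>d>0. \<forall>y. z2_abs (z2_diff y x) < d \<longrightarrow> z2_abs (z2_diff (F y) (F x)) < e"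
    using F unfolding z2_continuous_def by blast
  have cG: "\<And>e. e > 0 \<Longrightarrow> \<exists>d>0. \<forall>y. z2_abs (z2_diff y x) < d \<longrightarrow> z2_abs (z2_diff (G y) (G x)) < e"
    using G unfolding z2_continuous_def by blast
  obtain d1 where d1: "d1 > 0" "\<forall>y. z2_abs (z2_diff y x) < d1 \<longrightarrow> z2_abs (z2_diff (F y) (F x)) < (1/2)^i"
    using cF[OF e] by blast
  obtain d2 where d2: "d2 > 0" "\<forall>y. z2_abs (z2_diff y x) < d2 \<longrightarrow> z2_abs (z2_diff (G y) (G x)) < (1/2)^i"
    using cG[OF e] by blast
  have md: "min d1 d2 > 0" using d1 d2 by simp
  obtain m where m: "(1/2::real)^m < min d1 d2" using small_pow[OF md] by blast
  define y where "y = z2_of_nat (nat (z2_trunc x m))"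
  have "\<forall>j<m. y j = x j" using approx_nat y_def by simp
  then have "z2_abs (z2_diff y x) \<le> (1/2)^m" by (rule agree_abs)
  then have "z2_abs (z2_diff y x) < d1" "z2_abs (z2_diff y x) < d2" using m by auto
  then have "z2_abs (z2_diff (F y) (F x)) < (1/2)^i" "z2_abs (z2_diff (G y) (G x)) < (1/2)^i"
    using d1(2) d2(2) by blast+
  then have "\<forall>j<Suc i. \<not> z2_diff (F y) (F x) j" "\<forall>j<Suc i. \<not> z2_diff (G y) (G x) j"
    using abs_lt_imp by blast+
  then have "F y i = F x i" "G y i = G x i"
    using diff_zero_iff[of "Suc i" "F y" "F x"] diff_zero_iff[of "Suc i" "G y" "G x"] by auto
  moreover have "F y = G y" using eq y_def by simp
  ultimately show "F x i = G x i" by simp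
qed

lemma bit_mod_nat: "bit ((n::nat) mod 2 ^ Suc i) i = bit n i"
  by (simp only: take_bit_eq_mod[symmetric] bit_take_bit_iff) simp

lemma bit_A_mod: "bit (A (n mod 2 ^ Suc i)) i = bit (A n) i"
proof -
  have e: "A (n mod 2 ^ Suc i) mod 2 ^ Suc i = A n mod 2 ^ Suc i" by (rule A_mod[symmetric])
  have "bit (A (n mod 2 ^ Suc i)) i = bit (A (n mod 2 ^ Suc i) mod 2 ^ Suc i) i" by (simp only: bit_mod_nat)
  also have "\<dots> = bit (A n mod 2 ^ Suc i) i" by (simp only: e)
  also have "\<dots> = bit (A n) i" by (simp only: bit_mod_nat)
  finally show ?thesis .
qed

lemma nat_trunc_mono: "j \<le> k \<Longrightarrow> nat (z2_trunc x j) = nat (z2_trunc x k) mod 2 ^ j"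
proof -
  assume jk: "j \<le> k"
  have e: "int (nat (z2_trunc x k)) = z2_trunc x k" using trunc_bounds by simp
  have "z2_trunc x j = take_bit j (int (nat (z2_trunc x k)))" using trunc_mono[OF jk] e by simp
  also have "\<dots> = int (take_bit j (nat (z2_trunc x k)))" by (simp only: take_bit_of_nat)
  finally show ?thesis by (simp add: take_bit_eq_mod)
qed

definition Aext :: "z2 \<Rightarrow> z2" where
  "Aext x = (\<lambda>i. bit (A (nat (z2_trunc x (Suc i)))) i)"

lemma Aext_bit: "i < k \<Longrightarrow> Aext x i = bit (A (nat (z2_trunc x k))) i"
proof -
  assume ik: "i < k"
  have e: "nat (z2_trunc x (Suc i)) = nat (z2_trunc x k) mod 2^Suc i"
    by (rule nat_trunc_mono) (use ik in simp)
  have "Aext x i = bit (A (nat (z2_trunc x (Suc i)))) i" by (simp only: Aext_def)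
  also have "\<dots> = bit (A (nat (z2_trunc x k) mod 2^Suc i)) i" by (simp only: e)
  also have "\<dots> = bit (A (nat (z2_trunc x k))) i" by (rule bit_A_mod)
  finally show ?thesis .
qed

lemma trunc_of_nat: "z2_trunc (z2_of_nat n) k = int (n mod 2 ^ k)"
proof -
  have "z2_trunc (z2_of_nat n) k = take_bit k (int n)"
    by (rule trunc_take_bit) (simp add: z2_of_nat_def z2_of_int_bit)
  then show ?thesis by (simp add: take_bit_eq_mod zmod_int)
qed

lemma Aext_nat: "Aext (z2_of_nat n) = z2_of_nat (A n)"
proof (intro ext)
  fix i
  have "Aext (z2_of_nat n) i = bit (A (n mod 2 ^ Suc i)) i"
    unfolding Aext_def trunc_of_nat by simp
  also have "\<dots> = bit (A n) i" by (rule bit_A_mod)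
  finally show "Aext (z2_of_nat n) i = z2_of_nat (A n) i" by (simp add: z2_of_nat_bit)
qed

lemma Aext_cont: "z2_continuous Aext"
  unfolding z2_continuous_def
proof (intro allI impI)
  fix x :: z2 and e :: real
  assume e: "e > 0"
  obtain k where k: "(1/2::real)^k < e" using small_pow[OF e] by blast
  show "\<exists>d>0. \<forall>y. z2_abs (z2_diff y x) < d \<longrightarrow> z2_abs (z2_diff (Aext y) (Aext x)) < e"
  proof (intro exI[of _ "(1/2::real)^k"] conjI allI impI)
    show "(1/2::real)^k > 0" by simp
    fix y assume "z2_abs (z2_diff y x) < (1/2)^k"
    then have "\<forall>j<Suc k. \<not> z2_diff y x j" by (rule abs_lt_imp)
    then have "\<forall>j<Suc k. y j = x j" by (simp only: diff_zero_iff)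
    then have tr: "z2_trunc y (Suc k) = z2_trunc x (Suc k)" by (simp only: trunc_eq_iff)
    have "\<forall>j<Suc k. Aext y j = Aext x j"
    proof (intro allI impI)
      fix j assume j: "j < Suc k"
      show "Aext y j = Aext x j" using Aext_bit[OF j, of y] Aext_bit[OF j, of x] tr by simp
    qed
    then have "z2_abs (z2_diff (Aext y) (Aext x)) \<le> (1/2)^Suc k" by (rule agree_abs)
    also have "\<dots> \<le> (1/2)^k" by (simp only: half_pow_le)
    also have "\<dots> < e" by (rule k)
    finally show "z2_abs (z2_diff (Aext y) (Aext x)) < e" .
  qed
qed

lemma ext_unique: "\<exists>!F. z2_continuous F \<and> (\<forall>n. F (z2_of_nat n) = z2_of_nat (A n))"
proof
  show "z2_continuous Aext \<and> (\<forall>n. Aext (z2_of_nat n) = z2_of_nat (A n))"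
    using Aext_cont Aext_nat by blast
next
  fix F assume "z2_continuous F \<and> (\<forall>n. F (z2_of_nat n) = z2_of_nat (A n))"
  then show "F = Aext" using cont_unique[of F Aext] Aext_cont Aext_nat by simp
qed

lemma Atil_eq: "Atil = Aext"
  unfolding Atil_def
  by (rule the1_equality[OF ext_unique]) (simp add: Aext_cont Aext_nat)

lemma ck_char: "k \<ge> 1 \<Longrightarrow> ck k < 2^k \<and> (\<forall>n. 2^k dvd A n \<longleftrightarrow> n mod 2^k = ck k)"
proof -
  assume k: "k \<ge> 1"
  obtain r where r: "r < 2^k" "\<forall>n. 2^k dvd A n \<longleftrightarrow> n mod 2^k = r" using A_char[OF k] by blast
  have "ck k = r" unfolding ck_def
  proof (rule the_equality)
    show "r < 2^k \<and> 2^k dvd A r" using r by simp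
  next
    fix c assume "c < 2^k \<and> 2^k dvd A c"
    then show "c = r" using r by (metis mod_less)
  qed
  then show ?thesis using r by simp
qed

lemma ck_unique: "k \<ge> 1 \<Longrightarrow> \<exists>!c::nat. c < 2 ^ k \<and> 2 ^ k dvd A c"
proof -
  assume k: "k \<ge> 1"
  show ?thesis
  proof (rule ex1I[of _ "ck k"])
    show "ck k < 2 ^ k \<and> 2 ^ k dvd A (ck k)" using ck_char[OF k] by simp
  next
    fix c assume "c < 2 ^ k \<and> 2 ^ k dvd A c"
    then show "c = ck k" using ck_char[OF k] by (metis mod_less)
  qed
qed

lemma ck_mod: "1 \<le> j \<Longrightarrow> j \<le> k \<Longrightarrow> ck k mod 2^j = ck j"
proof -
  assume j: "1 \<le> j" "j \<le> k"
  have "2^k dvd A (ck k)" using ck_char[of k] j by simp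
  moreover have "(2::nat)^j dvd 2^k" using j by (simp add: le_imp_power_dvd)
  ultimately have "2^j dvd A (ck k)" using dvd_trans by blast
  then show ?thesis using ck_char[of j] j by simp
qed

definition cc :: z2 where "cc = (\<lambda>i. bit (ck (Suc i)) i)"

lemma cc_bit: "i < k \<Longrightarrow> cc i = bit (ck k) i"
proof -
  assume ik: "i < k"
  have "ck k mod 2^Suc i = ck (Suc i)" using ck_mod[of "Suc i" k] ik by simp
  then show ?thesis unfolding cc_def using bit_mod_nat[of "ck k" i] by simp
qed

lemma trunc_cc: "k \<ge> 1 \<Longrightarrow> z2_trunc cc k = int (ck k)"
proof -
  assume k: "k \<ge> 1"
  have "z2_trunc cc k = take_bit k (int (ck k))"
    by (rule trunc_take_bit) (simp add: cc_bit bit_of_nat_iff_bit)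
  then show ?thesis using ck_char[OF k] by (simp add: take_bit_of_nat take_bit_eq_mod)
qed

lemma Aext_zero_iff: "(\<forall>i<k. \<not> Aext x i) \<longleftrightarrow> (\<forall>i<k. x i = cc i)"
proof (cases "k = 0")
  case True then show ?thesis by simp
next
  case False
  then have k: "k \<ge> 1" by simp
  define N where "N = nat (z2_trunc x k)"
  have eN: "int N = z2_trunc x k" using trunc_bounds N_def by simp
  have "int N < int (2^k)" using eN trunc_bounds[of x k] by simp
  then have Nlt: "N < 2^k" by (simp only: of_nat_less_iff)
  have "(\<forall>i<k. \<not> Aext x i) \<longleftrightarrow> (\<forall>i<k. \<not> bit (A N) i)" using Aext_bit N_def by simp
  also have "\<dots> \<longleftrightarrow> take_bit k (A N) = 0" by (simp add: take_bit_zero_nat)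
  also have "\<dots> \<longleftrightarrow> 2^k dvd A N" by (simp add: take_bit_eq_0_iff)
  also have "\<dots> \<longleftrightarrow> N = ck k" using ck_char[OF k] Nlt by simp
  also have "\<dots> \<longleftrightarrow> z2_trunc x k = z2_trunc cc k" using trunc_cc[OF k] eN by auto
  also have "\<dots> \<longleftrightarrow> (\<forall>i<k. x i = cc i)" by (rule trunc_eq_iff)
  finally show ?thesis .
qed

lemma Atil_zero: "Atil x = z2_zero \<longleftrightarrow> x = cc"
proof -
  have "Atil x = z2_zero \<longleftrightarrow> (\<forall>i. \<not> Aext x i)"
    by (simp add: Atil_eq z2_zero_def fun_eq_iff)
  also have "\<dots> \<longleftrightarrow> (\<forall>k. \<forall>i<k. \<not> Aext x i)" using lessI by blast
  also have "\<dots> \<longleftrightarrow> (\<forall>k. \<forall>i<k. x i = cc i)" using Aext_zero_iff by simp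
  also have "\<dots> \<longleftrightarrow> (\<forall>i. x i = cc i)" using lessI by blast
  also have "\<dots> \<longleftrightarrow> x = cc" by (simp add: fun_eq_iff)
  finally show ?thesis .
qed

lemma Atil_abs: "z2_abs (Atil x) = z2_abs (z2_diff x cc)"
  unfolding Atil_eq by (rule abs_eq) (simp add: Aext_zero_iff diff_zero_iff)

lemma cc_tendsto: "z2_tendsto (\<lambda>k. z2_of_nat (ck k)) cc"
  unfolding z2_tendsto_def
proof (intro allI impI)
  fix e :: real assume e: "e > 0"
  obtain N where N: "(1/2::real)^N < e" using small_pow[OF e] by blast
  show "\<exists>N. \<forall>k\<ge>N. z2_abs (z2_diff (z2_of_nat (ck k)) cc) < e"
  proof (intro exI[of _ N] allI impI)
    fix k assume kN: "k \<ge> N"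
    have "\<forall>i<k. z2_of_nat (ck k) i = cc i" using cc_bit by (simp add: z2_of_nat_bit)
    then have "z2_abs (z2_diff (z2_of_nat (ck k)) cc) \<le> (1/2)^k" by (rule agree_abs)
    also have "\<dots> \<le> (1/2)^N" using kN half_pow_le by simp
    finally show "z2_abs (z2_diff (z2_of_nat (ck k)) cc) < e" using N by simp
  qed
qed
fun R :: "nat \<Rightarrow> nat \<Rightarrow> nat" where
  "R 0 n = 0" | "R (Suc j) n = (n + Suc j) * R j n + 1"
fun Q :: "nat \<Rightarrow> nat \<Rightarrow> nat" where
  "Q 0 n = 1" | "Q (Suc j) n = (n + Suc j) * Q j n"
fun Rm :: "nat \<Rightarrow> nat \<Rightarrow> nat \<Rightarrow> nat" where
  "Rm 0 n M = 0" | "Rm (Suc j) n M = ((n + Suc j) * Rm j n M + 1) mod M"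
fun Qm :: "nat \<Rightarrow> nat \<Rightarrow> nat \<Rightarrow> nat" where
  "Qm 0 n M = 1 mod M" | "Qm (Suc j) n M = ((n + Suc j) * Qm j n M) mod M"

lemma A_shift: "A (n + j) = R j n + Q j n * A n"
  by (induction j) (simp_all add: algebra_simps)

lemma Rm_eq: "Rm j n M = R j n mod M"
proof (induction j)
  case 0 then show ?case by simp
next
  case (Suc j)
  have "Rm (Suc j) n M = ((n + Suc j) * (R j n mod M) + 1) mod M" by (simp only: Rm.simps Suc)
  also have "\<dots> = ((n + Suc j) * R j n + 1) mod M" by (metis mod_add_left_eq mod_mult_right_eq)
  finally show ?case by (simp only: R.simps)
qed

lemma Qm_eq: "Qm j n M = Q j n mod M"
proof (induction j)
  case 0 then show ?case by simp
next
  case (Suc j)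
  have "Qm (Suc j) n M = ((n + Suc j) * (Q j n mod M)) mod M" by (simp only: Qm.simps Suc)
  also have "\<dots> = ((n + Suc j) * Q j n) mod M" by (metis mod_mult_right_eq)
  finally show ?case by (simp only: Q.simps)
qed

lemma A_shift_mod: "A (n + j) mod M = (Rm j n M + Qm j n M * A n) mod M"
proof -
  have "(Rm j n M + Qm j n M * A n) mod M = (R j n mod M + (Q j n mod M) * A n) mod M"
    by (simp only: Rm_eq Qm_eq)
  also have "\<dots> = (R j n mod M + ((Q j n mod M) * A n) mod M) mod M" by (simp only: mod_add_right_eq)
  also have "\<dots> = (R j n mod M + (Q j n * A n) mod M) mod M" by (simp only: mod_mult_left_eq)
  also have "\<dots> = (R j n + Q j n * A n) mod M" by (simp only: mod_add_eq)
  finally show ?thesis by (simp only: A_shift)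
qed

lemma Rm_num: "Rm (numeral w) n M = ((n + numeral w) * Rm (pred_numeral w) n M + 1) mod M"
  by (simp only: numeral_eq_Suc Rm.simps)
lemma Qm_num: "Qm (numeral w) n M = ((n + numeral w) * Qm (pred_numeral w) n M) mod M"
  by (simp only: numeral_eq_Suc Qm.simps)

lemma r30: "Rm 30 36866645 67108864 = 0"
  by (simp add: Rm_num)
lemma q30: "Qm 30 36866645 67108864 = 0"
  by (simp add: Qm_num)

lemma A_c26: "2^26 dvd A 36866675"
proof -
  have "A (36866645 + 30) mod 67108864 = (Rm 30 36866645 67108864 + Qm 30 36866645 67108864 * A 36866645) mod 67108864"
    by (rule A_shift_mod)
  also have "\<dots> = 0" by (simp add: r30 q30)
  finally show ?thesis by (simp add: dvd_eq_mod_eq_0)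
qed

lemma digs0: "list_all (\<lambda>i. bit (36866675::nat) i = (c_digits ! i = 1)) [0..<26]"
  by (simp add: upt_rec c_digits_def bit_iff_odd)

lemma digs: "\<forall>i<26. bit (36866675::nat) i = (c_digits ! i = 1)"
  using digs0 by (simp add: list_all_iff)

lemma ck26: "ck 26 = 36866675"
proof -
  have c: "ck 26 < 2^26 \<and> (\<forall>n. 2^26 dvd A n \<longleftrightarrow> n mod 2^26 = ck 26)" by (rule ck_char) simp
  then have "36866675 mod 2^26 = ck 26" using A_c26 by blast
  then show ?thesis by simp
qed

lemma cc_digits: "\<forall>i<length c_digits. cc i = (c_digits ! i = 1)"
proof (intro allI impI)
  fix i assume i: "i < length c_digits"
  then have i26: "i < 26" by (simp add: c_digits_def)
  have "cc i = bit (ck 26) i" by (rule cc_bit[OF i26])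
  also have "\<dots> = bit (36866675::nat) i" by (simp only: ck26)
  also have "\<dots> = (c_digits ! i = 1)" using digs i26 by blast
  finally show "cc i = (c_digits ! i = 1)" .
qed

theorem propositionA10:
  shows "(\<exists>!F. z2_continuous F \<and> (\<forall>n. F (z2_of_nat n) = z2_of_nat (A n)))
    \<and> (\<forall>k\<ge>1. \<exists>!c::nat. c < 2 ^ k \<and> 2 ^ k dvd A c)
    \<and> (\<exists>c. z2_tendsto (\<lambda>k. z2_of_nat (ck k)) c
           \<and> (\<forall>x. Atil x = z2_zero \<longleftrightarrow> x = c)
           \<and> (\<forall>i<length c_digits. c i = (c_digits ! i = 1))
           \<and> (\<forall>n. z2_abs (Atil n) = z2_abs (z2_diff n c)))"
  using ext_unique ck_unique cc_tendsto Atil_zero cc_digits Atil_abs by blast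

end
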